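(* For every $k,s\in\mathbb{N}$, $$\mathbf{E}\bigl|V_G^s(k)\setminus V_X^s(k)\bigr|\le 4\,s\,k^2/(n-1).$$
   Context: Let $V=\{1,\dots,n\}$, $T_1,T_2,\dots$ i.i.d. uniformly random transpositions of $V$, and $\pi_s=T_s\circ\cdots\circ T_1$. Let $G^s$ be the graph on $V$ whose edges are the pairs $\{u,v\}$ such that $(u,v)$ appears among $T_1,\dots,T_s$. $V_G^s(k)\subset V$ denotes the union of the connected components of $G^s$ with at least $k$ vertices, and $V_X^s(k)\subset V$ denotes the union of the cycles of $\pi_s$ with at least $k$ elements. *)

theory Defs
  imports "HOL-Probability.Probability" "HOL-Combinatorics.Combinatorics"
begin

text \<open>Vertex set V = {1..n}. A transposition of V is encoded as an ordered pair (a,b)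
  with 1 \<le> a < b \<le> n, standing for the permutation swapping a and b.\<close>

definition transps :: "nat \<Rightarrow> (nat \<times> nat) set" where
  "transps n = {(a, b). 1 \<le> a \<and> a < b \<and> b \<le> n}"

definition transp_perm :: "nat \<times> nat \<Rightarrow> nat \<Rightarrow> nat" where
  "transp_perm t = Transposition.transpose (fst t) (snd t)"

text \<open>pi_s = T_s o ... o T_1 for the list ts = [T_1, ..., T_s].\<close>
definition perm_of :: "(nat \<times> nat) list \<Rightarrow> nat \<Rightarrow> nat" where
  "perm_of ts = fold (\<lambda>t p. transp_perm t \<circ> p) ts id"

definition edge_rel :: "(nat \<times> nat) list \<Rightarrow> (nat \<times> nat) set" where
  "edge_rel ts = {(x, y). \<exists>t \<in> set ts. {x, y} = {fst t, snd t}}"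

definition component :: "(nat \<times> nat) list \<Rightarrow> nat \<Rightarrow> nat set" where
  "component ts x = {y. (x, y) \<in> (edge_rel ts)\<^sup>*}"

definition VG :: "nat \<Rightarrow> (nat \<times> nat) list \<Rightarrow> nat \<Rightarrow> nat set" where
  "VG n ts k = {x \<in> {1..n}. card (component ts x) \<ge> k}"

definition VX :: "nat \<Rightarrow> (nat \<times> nat) list \<Rightarrow> nat \<Rightarrow> nat set" where
  "VX n ts k = {x \<in> {1..n}. card (orbit (perm_of ts) x) \<ge> k}"

definition transp_seq_pmf :: "nat \<Rightarrow> nat \<Rightarrow> (nat \<times> nat) list pmf" where
  "transp_seq_pmf n s = replicate_pmf s (pmf_of_set (transps n))"

end

theory Submission
  imports Defs
begin

lemma replicate_pmf_snoc:
  "replicate_pmf (Suc n) p = replicate_pmf n p \<bind> (\<lambda>xs. map_pmf (\<lambda>x. xs @ [x]) p)"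
proof -
  have "replicate_pmf (n + 1) p = replicate_pmf n p \<bind> (\<lambda>xs. replicate_pmf 1 p \<bind> (\<lambda>ys. return_pmf (xs @ ys)))"
    by (rule replicate_pmf_distrib)
  also have "\<dots> = replicate_pmf n p \<bind> (\<lambda>xs. map_pmf (\<lambda>x. xs @ [x]) p)"
    by (simp add: replicate_pmf_1 map_pmf_def bind_assoc_pmf bind_return_pmf)
  finally show ?thesis by simp
qed

lemma exp_step_bound:
  fixes g :: "'a list \<Rightarrow> real"
  assumes T: "finite T" "T \<noteq> {}" and g0: "g [] \<le> 0"
  and step: "\<And>xs. set xs \<subseteq> T \<Longrightarrow> (\<Sum>x\<in>T. g (xs@[x])) / card T \<le> g xs + c"
  shows "measure_pmf.expectation (replicate_pmf s (pmf_of_set T)) g \<le> s * c"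
proof (induction s)
  case 0
  then show ?case using g0 by simp
next
  case (Suc s)
  let ?R = "replicate_pmf s (pmf_of_set T)"
  define A where "A = set_pmf ?R"
  have finA: "finite A"
  proof -
    have "{xs \<in> lists T. length xs = s} = {xs. set xs \<subseteq> T \<and> length xs = s}" by auto
    then show ?thesis by (simp add: A_def set_replicate_pmf finite_lists_length_eq T)
  qed
  have Asub: "\<And>a. a \<in> A \<Longrightarrow> set a \<subseteq> T" unfolding A_def using T
    by (auto simp: set_replicate_pmf)
  have "measure_pmf.expectation (replicate_pmf (Suc s) (pmf_of_set T)) g
      = (\<Sum>a\<in>A. pmf ?R a *\<^sub>R measure_pmf.expectation (map_pmf (\<lambda>x. a @ [x]) (pmf_of_set T)) g)"
    unfolding replicate_pmf_snoc
    by (rule pmf_expectation_bind[OF finA]) (use T in \<open>auto simp: A_def\<close>)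
  also have "\<dots> = (\<Sum>a\<in>A. pmf ?R a * ((\<Sum>x\<in>T. g (a@[x])) / card T))"
    using T by (simp add: integral_pmf_of_set)
  also have "\<dots> \<le> (\<Sum>a\<in>A. pmf ?R a * (g a + c))"
    by (intro sum_mono mult_left_mono step Asub) auto
  also have "\<dots> = (\<Sum>a\<in>A. pmf ?R a * g a) + c * (\<Sum>a\<in>A. pmf ?R a)"
    by (simp add: algebra_simps sum.distrib sum_distrib_left)
  also have "(\<Sum>a\<in>A. pmf ?R a) = 1"
    unfolding A_def using finA[unfolded A_def] by (simp add: sum_pmf_eq_1)
  also have "(\<Sum>a\<in>A. pmf ?R a * g a) = measure_pmf.expectation ?R g"
    by (subst integral_measure_pmf[OF finA]) (auto simp: A_def)
  finally show ?case using Suc.IH by (simp add: algebra_simps)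
qed

lemma orb_self: "permutation p \<Longrightarrow> x \<in> orbit p x"
  by (rule permutation_self_in_orbit)

lemma orb_same: assumes "permutation p" "y \<in> orbit p x" shows "orbit p y = orbit p x"
proof
  show "orbit p y \<subseteq> orbit p x" using assms(2) orbit_trans by fast
  have "x \<in> orbit p y" by (rule orbit_swap[OF orb_self[OF assms(1)] assms(2)])
  then show "orbit p x \<subseteq> orbit p y" using orbit_trans by fast
qed

lemma orb_fin: "permutation p \<Longrightarrow> finite (orbit p x)"
  by (rule finite_orbit[OF orb_self])

lemma orb_card_pos: "permutation p \<Longrightarrow> card (orbit p x) \<ge> 1"
  using orb_fin orb_self by (metis One_nat_def Suc_leI card_gt_0_iff empty_iff)

lemma orb_closed: assumes "x \<in> S" "\<And>y. y \<in> S \<Longrightarrow> f y \<in> S" shows "orbit f x \<subseteq> S"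
proof
  fix y assume "y \<in> orbit f x" then show "y \<in> S"
    by induct (use assms in auto)
qed

lemma orb_agree:
  assumes p: "permutation p" and q: "permutation q" and ag: "\<And>y. y \<in> orbit p x \<Longrightarrow> q y = p y"
  shows "orbit q x = orbit p x"
proof
  show "orbit q x \<subseteq> orbit p x"
  proof
    fix y assume "y \<in> orbit q x" then show "y \<in> orbit p x"
    proof induct
      case base then show ?case using ag[OF orb_self[OF p]] by (auto intro: orbit.intros)
    next
      case (step y) then show ?case using ag by (auto intro: orbit.intros)
    qed
  qed
next
  show "orbit p x \<subseteq> orbit q x"
  proof
    fix y assume "y \<in> orbit p x" then show "y \<in> orbit q x"
    proof induct
      case base then show ?case using ag[OF orb_self[OF p]] by (metis orbit.base)
    next
      case (step y) then show ?case using ag by (metis orbit.step)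
    qed
  qed
qed

lemma walk:
  fixes p :: "'a \<Rightarrow> 'a"
  assumes "\<And>t. 1 \<le> t \<Longrightarrow> t < r \<Longrightarrow> (p ^^ t) z \<notin> {a, b}"
  shows "t < r \<Longrightarrow> ((Transposition.transpose a b \<circ> p) ^^ t) z = (p ^^ t) z"
proof (induction t)
  case 0 then show ?case by simp
next
  case (Suc t)
  then have "(p ^^ Suc t) z \<notin> {a, b}" using assms[of "Suc t"] by simp
  then show ?case using Suc by (simp add: transpose_eq_iff)
qed

lemma first_hit:
  fixes p :: "'a \<Rightarrow> 'a"
  assumes "z \<noteq> z'" "z' \<in> orbit p z"
  shows "\<exists>r\<ge>1. (p ^^ r) z = z' \<and> (\<forall>t. 1 \<le> t \<longrightarrow> t < r \<longrightarrow> (p ^^ t) z \<notin> {z, z'})"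
proof -
  obtain n where n: "n > 0" "(p ^^ n) z = z'" using assms(2) by (auto simp: orbit_altdef)
  define r where "r = (LEAST m. m > 0 \<and> (p ^^ m) z = z')"
  have r: "r > 0" "(p ^^ r) z = z'" using LeastI[of "\<lambda>m. m > 0 \<and> (p ^^ m) z = z'", OF conjI[OF n]]
    by (auto simp: r_def)
  have rmin: "\<And>m. m > 0 \<Longrightarrow> (p ^^ m) z = z' \<Longrightarrow> r \<le> m" unfolding r_def by (rule Least_le) simp
  have "(p ^^ t) z \<notin> {z, z'}" if "1 \<le> t" "t < r" for t
  proof
    assume h: "(p ^^ t) z \<in> {z, z'}"
    show False
    proof (cases "(p ^^ t) z = z'")
      case True then show ?thesis using rmin[of t] that by auto
    next
      case False
      then have pz: "(p ^^ t) z = z" using h by auto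
      have "(p ^^ (r - t)) z = (p ^^ (r - t)) ((p ^^ t) z)" using pz by simp
      also have "\<dots> = (p ^^ r) z" using that by (simp add: funpow_add[symmetric] comp_def)
        (metis funpow_add comp_apply le_add_diff_inverse2 less_imp_le_nat)
      finally have "(p ^^ (r - t)) z = z'" using r by simp
      then show False using rmin[of "r - t"] that by auto
    qed
  qed
  then show ?thesis using r by (intro exI[of _ r]) auto
qed

lemma perm_q: "permutation p \<Longrightarrow> permutation (Transposition.transpose a b \<circ> p)"
  by (simp add: permutation_compose permutation_swap_id)

lemma funpow_shift:
  fixes p :: "'a \<Rightarrow> 'a"
  assumes "i \<le> j" shows "(p ^^ j) z = (p ^^ i) ((p ^^ (j - i)) z)"
  using assms by (metis funpow_add comp_apply le_add_diff_inverse)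

lemma orb_frag:
  fixes p :: "'a \<Rightarrow> 'a"
  assumes p: "permutation p" and zz: "z \<noteq> z'" "{z, z'} = {a, b}" and r: "r \<ge> 1" "(p ^^ r) z = z'"
    and nohit: "\<And>t. 1 \<le> t \<Longrightarrow> t < r \<Longrightarrow> (p ^^ t) z \<notin> {a, b}"
  shows "orbit (Transposition.transpose a b \<circ> p) z = (\<lambda>t. (p ^^ t) z) ` {..<r}"
    and "card (orbit (Transposition.transpose a b \<circ> p) z) = r"
    and "z' \<notin> orbit (Transposition.transpose a b \<circ> p) z"
proof -
  let ?q = "Transposition.transpose a b \<circ> p"
  let ?S = "(\<lambda>t. (p ^^ t) z) ` {..<r}"
  have q: "permutation ?q" using perm_q[OF p] .
  have tz: "Transposition.transpose a b z' = z" using zz by (auto simp: transpose_eq_iff doubleton_eq_iff)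
  have zS: "z \<in> ?S" using r by (auto intro!: image_eqI[of _ _ 0])
  have cl: "?q y \<in> ?S" if yS: "y \<in> ?S" for y
  proof -
    obtain t where t: "t < r" "y = (p ^^ t) z" using yS by blast
    have qy: "?q y = Transposition.transpose a b ((p ^^ Suc t) z)" using t by simp
    show ?thesis
    proof (cases "Suc t < r")
      case True
      then have "(p ^^ Suc t) z \<notin> {a, b}" using nohit[of "Suc t"] by simp
      then have "?q y = (p ^^ Suc t) z" using qy by (simp add: transpose_eq_iff)
      then show ?thesis using True by (auto intro!: image_eqI[of _ _ "Suc t"])
    next
      case False
      then have "Suc t = r" using t by simp
      then have "?q y = z" using qy r tz by simp
      then show ?thesis using zS by simp
    qed
  qed
  have sub1: "orbit ?q z \<subseteq> ?S" by (rule orb_closed[OF zS cl])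
  have sub2: "?S \<subseteq> orbit ?q z"
  proof
    fix y assume "y \<in> ?S"
    then obtain t where t: "t < r" "y = (p ^^ t) z" by auto
    have "y = (?q ^^ t) z" using walk[of r p z a b t] nohit t by simp
    then show "y \<in> orbit ?q z" using funpow_in_orbit[OF orb_self[OF q]] by simp
  qed
  show eq: "orbit ?q z = ?S" using sub1 sub2 by blast
  have injp: "inj p" using permutation_bijective[OF p] bij_is_inj by blast
  have inj: "inj_on (\<lambda>t. (p ^^ t) z) {..<r}"
  proof (rule inj_onI)
    have aux: "False" if "i < j" "j < r" "(p ^^ i) z = (p ^^ j) z" for i j
    proof -
      have "(p ^^ i) ((p ^^ (j - i)) z) = (p ^^ i) z" using funpow_shift[of i j p z] that by simp
      then have "(p ^^ (j - i)) z = z" using inj_fn[OF injp, of i] by (simp add: inj_eq)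
      moreover have "z \<in> {a, b}" using zz(2) by blast
      moreover have "1 \<le> j - i" "j - i < r" using that by auto
      ultimately show False using nohit[of "j - i"] by auto
    qed
    fix i j assume "i \<in> {..<r}" "j \<in> {..<r}" "(p ^^ i) z = (p ^^ j) z"
    then show "i = j" using aux[of i j] aux[of j i] by (cases i j rule: linorder_cases) auto
  qed
  show "card (orbit ?q z) = r" using eq card_image[OF inj] by simp
  show "z' \<notin> orbit ?q z"
  proof
    assume "z' \<in> orbit ?q z"
    then obtain t where t: "t < r" "z' = (p ^^ t) z" using eq by auto
    show False
    proof (cases "t = 0")
      case True then show ?thesis using t zz by simp
    next
      case False then show ?thesis using nohit[of t] t zz by auto
    qed
  qed
qed

lemma orb_merge:
  fixes p :: "'a \<Rightarrow> 'a"
  assumes p: "permutation p" and ab: "b \<notin> orbit p a"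
  shows "\<And>x. x \<in> orbit p a \<union> orbit p b \<Longrightarrow>
     orbit (Transposition.transpose a b \<circ> p) x = orbit p a \<union> orbit p b"
proof -
  let ?q = "Transposition.transpose a b \<circ> p"
  let ?A = "orbit p a" and ?B = "orbit p b"
  have q: "permutation ?q" using perm_q[OF p] .
  have ba: "a \<notin> ?B" using ab orb_same[OF p] orb_self[OF p] by metis
  have aA: "a \<in> ?A" and bB: "b \<in> ?B" using orb_self[OF p] by auto
  have nab: "a \<noteq> b" using ab aA by auto
  have cl: "?q y \<in> ?A \<union> ?B" if "y \<in> ?A \<union> ?B" for y
  proof -
    have "p y \<in> ?A \<union> ?B" using that by (auto intro: orbit.step)
    then show ?thesis using aA bB by (auto simp: Transposition.transpose_def)
  qed
  have qeq: "?q y = p y" if "p y \<noteq> a" "p y \<noteq> b" for y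
    using that by simp
  have gen: "y \<in> orbit p c \<Longrightarrow> y \<in> orbit ?q c" if cc: "c \<in> {a, b}" and nd: "d \<in> {a, b}" "c \<noteq> d"
     and nb: "d \<notin> orbit p c" for c d y
  proof (induct rule: orbit.induct)
    case base
    have "p c \<noteq> d" using nb by (auto intro: orbit.base)
    show ?case
    proof (cases "p c = c")
      case True then show ?thesis using orb_self[OF q, of c] by metis
    next
      case False
      then have "?q c = p c" using qeq[of c] cc nd \<open>p c \<noteq> d\<close> by auto
      then show ?thesis by (metis orbit.base)
    qed
  next
    case (step y)
    have "p y \<noteq> d" using nb step(1) by (auto intro: orbit.step)
    show ?case
    proof (cases "p y = c")
      case True then show ?thesis using orb_self[OF q, of c] by metis
    next
      case False
      then have "?q y = p y" using qeq[of y] cc nd \<open>p y \<noteq> d\<close> by auto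
      then show ?thesis using step(2) by (metis orbit.step)
    qed
  qed
  have Asub: "?A \<subseteq> orbit ?q a" using gen[of a b] ab nab by auto
  have Bsub: "?B \<subseteq> orbit ?q b" using gen[of b a] ba nab by auto
  obtain n where n: "n > 0" "(p ^^ n) a = a" using aA by (auto simp: orbit_altdef)
  define y where "y = (p ^^ (n - 1)) a"
  have yA: "y \<in> ?A" unfolding y_def by (rule funpow_in_orbit[OF aA])
  have py: "p y = a" unfolding y_def using n by (metis Suc_diff_1 funpow.simps(2) comp_apply)
  have "?q y = b" using py by simp
  then have bq: "b \<in> orbit ?q a" using Asub yA by (metis orbit.step subsetD)
  have eqb: "orbit ?q b = orbit ?q a" by (rule orb_same[OF q bq])
  have all: "orbit ?q a = ?A \<union> ?B"
    using Asub Bsub eqb orb_closed[of a "?A \<union> ?B" ?q] cl aA by blast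
  fix x assume "x \<in> ?A \<union> ?B"
  then have "x \<in> orbit ?q a" using all by blast
  then show "orbit ?q x = ?A \<union> ?B" using orb_same[OF q] all by metis
qed

lemma card_preimage_le:
  fixes p :: "nat \<Rightarrow> nat"
  assumes p: "permutation p"
  shows "finite (\<Union>i<j. {c. (p ^^ i) c = x})" "card (\<Union>i<j. {c. (p ^^ i) c = x}) \<le> j"
proof -
  have bj: "bij (p ^^ i)" for i using permutation_bijective[OF p] by simp
  have sub: "{c. (p ^^ i) c = x} \<subseteq> {inv (p ^^ i) x}" for i
    using bj[of i] by (auto simp: bij_is_inj inv_f_f)
  then have fin: "finite {c. (p ^^ i) c = x}" for i using finite_subset by blast
  have c1: "card {c. (p ^^ i) c = x} \<le> 1" for i using card_mono[OF _ sub[of i]] by simp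
  show "finite (\<Union>i<j. {c. (p ^^ i) c = x})" using fin by blast
  have "card (\<Union>i<j. {c. (p ^^ i) c = x}) \<le> (\<Sum>i<j. card {c. (p ^^ i) c = x})"
    by (rule card_UN_le) simp
  also have "\<dots> \<le> (\<Sum>i<j. 1)" by (intro sum_mono c1)
  finally show "card (\<Union>i<j. {c. (p ^^ i) c = x}) \<le> j" by simp
qed

lemma count_frag:
  fixes p :: "nat \<Rightarrow> nat"
  assumes p: "permutation p"
  shows "card {t \<in> transps n. orbit (transp_perm t \<circ> p) x \<subset> orbit p x
                 \<and> card (orbit (transp_perm t \<circ> p) x) = j} \<le> j"
proof -
  define D where "D = (\<Union>i<j. {c. (p ^^ i) c = x})"
  have Dfin: "finite D" and Dcard: "card D \<le> j" unfolding D_def using card_preimage_le[OF p] by auto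
  let ?f = "\<lambda>c. (min c ((p ^^ j) c), max c ((p ^^ j) c))"
  have sub: "{t \<in> transps n. orbit (transp_perm t \<circ> p) x \<subset> orbit p x
                 \<and> card (orbit (transp_perm t \<circ> p) x) = j} \<subseteq> ?f ` D"
  proof
    fix t assume "t \<in> {t \<in> transps n. orbit (transp_perm t \<circ> p) x \<subset> orbit p x
                 \<and> card (orbit (transp_perm t \<circ> p) x) = j}"
    then have tT: "t \<in> transps n" and st: "orbit (transp_perm t \<circ> p) x \<subset> orbit p x"
      and cj0: "card (orbit (transp_perm t \<circ> p) x) = j" by blast+
    obtain a b where t1: "t = (a, b)" by (cases t)
    have t: "t = (a, b)" "a < b" using t1 tT by (auto simp: transps_def)
    have strict: "orbit (Transposition.transpose a b \<circ> p) x \<subset> orbit p x"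
      using st t1 by (simp add: transp_perm_def)
    have cj: "card (orbit (Transposition.transpose a b \<circ> p) x) = j"
      using cj0 t1 by (simp add: transp_perm_def)
    let ?q = "Transposition.transpose a b \<circ> p"
    have q: "permutation ?q" by (rule perm_q[OF p])
    have "\<exists>z\<in>{a, b}. z \<in> orbit ?q x"
    proof (rule ccontr)
      assume nz: "\<not> (\<exists>z\<in>{a, b}. z \<in> orbit ?q x)"
      have "p y = ?q y" if "y \<in> orbit ?q x" for y
      proof -
        have "?q y \<in> orbit ?q x" using that by (rule orbit.step)
        then have "?q y \<notin> {a, b}" using nz by blast
        then show ?thesis by (auto simp: transpose_eq_iff)
      qed
      then have "orbit p x = orbit ?q x" by (rule orb_agree[OF q p])
      then show False using strict by simp
    qed
    then obtain z where z: "z \<in> {a, b}" "z \<in> orbit ?q x" by blast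
    define z' where "z' = (if z = a then b else a)"
    have zz: "z \<noteq> z'" "{z, z'} = {a, b}" using z(1) t(2) by (auto simp: z'_def)
    have tr: "Transposition.transpose z z' = Transposition.transpose a b"
      using zz by (metis doubleton_eq_iff transpose_commute)
    have zp: "z \<in> orbit p x" using z(2) strict by blast
    have Oqz: "orbit ?q z = orbit ?q x" by (rule orb_same[OF q z(2)])
    have Opz: "orbit p z = orbit p x" by (rule orb_same[OF p zp])
    have z'in: "z' \<in> orbit p z"
    proof (rule ccontr)
      assume "z' \<notin> orbit p z"
      then have "orbit (Transposition.transpose z z' \<circ> p) z = orbit p z \<union> orbit p z'"
        using orb_merge[OF p, of z' z z] orb_self[OF p, of z] by blast
      then have "z' \<in> orbit ?q z" using tr orb_self[OF p, of z'] by simp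
      then show False using Oqz Opz strict \<open>z' \<notin> orbit p z\<close> by blast
    qed
    obtain r where r: "r \<ge> 1" "(p ^^ r) z = z'" and nh: "\<And>t. 1 \<le> t \<Longrightarrow> t < r \<Longrightarrow> (p ^^ t) z \<notin> {a, b}"
      using first_hit[OF zz(1) z'in] zz(2) by metis
    note fr = orb_frag[OF p zz r nh]
    have rj: "r = j" using fr(2) Oqz cj by simp
    have "x \<in> orbit ?q z" using Oqz orb_self[OF q] by simp
    then obtain i where i: "i < j" "x = (p ^^ i) z" using fr(1) rj by auto
    have zD: "z \<in> D" unfolding D_def using i by auto
    have "t = ?f z" using t zz r rj by (auto simp: doubleton_eq_iff min_def max_def)
    then show "t \<in> ?f ` D" using zD by blast
  qed
  have "card {t \<in> transps n. orbit (transp_perm t \<circ> p) x \<subset> orbit p x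
                 \<and> card (orbit (transp_perm t \<circ> p) x) = j} \<le> card (?f ` D)"
    by (rule card_mono[OF _ sub]) (use Dfin in simp)
  also have "\<dots> \<le> card D" by (rule card_image_le[OF Dfin])
  finally show ?thesis using Dcard by simp
qed

definition wt :: "nat \<Rightarrow> (nat \<times> nat) list \<Rightarrow> nat \<Rightarrow> real" where
  "wt k ts x = (if card (orbit (perm_of ts) x) < k \<and> orbit (perm_of ts) x \<noteq> component ts x
                then 1 / real (card (orbit (perm_of ts) x)) else 0)"

definition Psi :: "nat \<Rightarrow> nat \<Rightarrow> (nat \<times> nat) list \<Rightarrow> real" where
  "Psi n k ts = (\<Sum>x\<in>{1..n}. wt k ts x)"

definition Fr :: "nat \<Rightarrow> (nat \<Rightarrow> nat) \<Rightarrow> (nat \<Rightarrow> nat) \<Rightarrow> nat \<Rightarrow> real" where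
  "Fr k p q x = (if orbit q x \<subset> orbit p x \<and> card (orbit q x) < k then 1 / real (card (orbit q x)) else 0)"

lemma wt_nonneg: "wt k ts x \<ge> 0" by (simp add: wt_def)
lemma Fr_nonneg: "Fr k p q x \<ge> 0" by (simp add: Fr_def)

lemma perm_of_Nil: "perm_of [] = id" by (simp add: perm_of_def)

lemma perm_of_snoc: "perm_of (ts @ [t]) = transp_perm t \<circ> perm_of ts"
  by (simp add: perm_of_def)

lemma perm_perm_of: "permutation (perm_of ts)"
proof (induction ts rule: rev_induct)
  case Nil then show ?case by (simp add: perm_of_Nil)
next
  case (snoc t ts) then show ?case
    unfolding perm_of_snoc transp_perm_def by (rule permutation_compose[OF permutation_swap_id])
qed

lemma edge_snoc: "edge_rel (ts @ [t]) = edge_rel ts \<union> {(x, y). {x, y} = {fst t, snd t}}"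
  by (auto simp: edge_rel_def)

lemma edge_conv: "(edge_rel ts)\<inverse> = edge_rel ts"
  by (auto simp: edge_rel_def insert_commute)

lemma comp_self: "x \<in> component ts x" by (simp add: component_def)

lemma comp_trans: "y \<in> component ts x \<Longrightarrow> z \<in> component ts y \<Longrightarrow> z \<in> component ts x"
  by (auto simp: component_def)

lemma comp_sym: "y \<in> component ts x \<Longrightarrow> x \<in> component ts y"
proof -
  assume "y \<in> component ts x"
  then have "(x, y) \<in> (edge_rel ts)\<^sup>*" by (simp add: component_def)
  then have "(y, x) \<in> ((edge_rel ts)\<inverse>)\<^sup>*" by (simp add: rtrancl_converse)
  then show ?thesis by (simp add: edge_conv component_def)
qed

lemma comp_same: "y \<in> component ts x \<Longrightarrow> component ts y = component ts x"
  using comp_trans comp_sym by blast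

lemma comp_mono: "component ts x \<subseteq> component (ts @ [t]) x"
  unfolding component_def by (auto simp: edge_snoc intro: rtrancl_mono[THEN subsetD, rotated])

lemma comp_closed:
  assumes "x \<in> S" "\<And>u v. (u, v) \<in> edge_rel ts \<Longrightarrow> u \<in> S \<Longrightarrow> v \<in> S"
  shows "component ts x \<subseteq> S"
proof
  fix y assume "y \<in> component ts x"
  then have "(x, y) \<in> (edge_rel ts)\<^sup>*" by (simp add: component_def)
  then show "y \<in> S" by induct (use assms in auto)
qed

lemma perm_in_comp: "perm_of ts x \<in> component ts x"
proof (induction ts arbitrary: x rule: rev_induct)
  case Nil then show ?case by (simp add: perm_of_Nil comp_self)
next
  case (snoc t ts)
  obtain a b where t: "t = (a, b)" by (cases t)
  let ?y = "perm_of ts x"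
  have y: "?y \<in> component (ts @ [t]) x" using snoc comp_mono by blast
  have ea: "(a, b) \<in> edge_rel (ts @ [t])" "(b, a) \<in> edge_rel (ts @ [t])"
    using t by (auto simp: edge_snoc)
  have "Transposition.transpose a b ?y \<in> component (ts @ [t]) x"
  proof (cases "?y = a \<or> ?y = b")
    case True then show ?thesis using y ea unfolding component_def
      by (auto intro: rtrancl_into_rtrancl)
  next
    case False then show ?thesis using y by simp
  qed
  then show ?case by (simp add: perm_of_snoc transp_perm_def t)
qed

lemma orbit_in_comp: "orbit (perm_of ts) x \<subseteq> component ts x"
proof (rule orb_closed)
  show "x \<in> component ts x" by (rule comp_self)
  fix y assume "y \<in> component ts x"
  then show "perm_of ts y \<in> component ts x" using perm_in_comp comp_trans by blast
qed

lemma perm_in_V: "set ts \<subseteq> transps n \<Longrightarrow> x \<in> {1..n} \<Longrightarrow> perm_of ts x \<in> {1..n}"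
proof (induction ts arbitrary: x rule: rev_induct)
  case Nil then show ?case by (simp add: perm_of_Nil)
next
  case (snoc t ts)
  obtain a b where t: "t = (a, b)" by (cases t)
  have "a \<in> {1..n}" "b \<in> {1..n}" using snoc.prems t by (auto simp: transps_def)
  moreover have "perm_of ts x \<in> {1..n}" using snoc by auto
  ultimately show ?case by (auto simp: perm_of_snoc transp_perm_def t Transposition.transpose_def)
qed

lemma orbit_in_V: assumes "set ts \<subseteq> transps n" "x \<in> {1..n}" shows "orbit (perm_of ts) x \<subseteq> {1..n}"
  by (rule orb_closed[OF assms(2)]) (rule perm_in_V[OF assms(1)])

lemma sum_orbit_const:
  assumes "finite S" "S \<noteq> {}" "\<And>x. x \<in> S \<Longrightarrow> f x = c / real (card S)"
  shows "sum f S = (c::real)"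
  using assms by simp

lemma step_ineq:
  assumes ts: "set ts \<subseteq> transps n" and tT: "t \<in> transps n"
  shows "Psi n k (ts @ [t]) \<le> Psi n k ts + (\<Sum>x\<in>{1..n}. Fr k (perm_of ts) (perm_of (ts @ [t])) x)"
proof -
  obtain a b where t: "t = (a, b)" by (cases t)
  have ab: "1 \<le> a" "a < b" "b \<le> n" using tT t by (auto simp: transps_def)
  define p where "p = perm_of ts"
  define q where "q = Transposition.transpose a b \<circ> p"
  have pq: "perm_of (ts @ [t]) = q" by (simp add: q_def p_def perm_of_snoc t transp_perm_def)
  have p: "permutation p" unfolding p_def by (rule perm_perm_of)
  have q: "permutation q" unfolding q_def by (rule perm_q[OF p])
  define V where "V = {1..n}"
  have finV: "finite V" by (simp add: V_def)
  define A where "A = orbit p a"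
  define B where "B = orbit p b"
  define K where "K = component ts"
  define K' where "K' = component (ts @ [t])"
  have wt_old: "wt k ts x = (if card (orbit p x) < k \<and> orbit p x \<noteq> K x
       then 1 / real (card (orbit p x)) else 0)" for x by (simp add: wt_def p_def K_def)
  have wt_new: "wt k (ts @ [t]) x = (if card (orbit q x) < k \<and> orbit q x \<noteq> K' x
       then 1 / real (card (orbit q x)) else 0)" for x by (simp add: wt_def pq K'_def)
  have aA: "a \<in> A" and bB: "b \<in> B" unfolding A_def B_def using orb_self[OF p] by auto
  have Kmono: "K x \<subseteq> K' x" for x unfolding K_def K'_def by (rule comp_mono)
  have Kedge: "v \<in> K x" if "(u, v) \<in> edge_rel ts" "u \<in> K x" for u v x
    using that unfolding K_def component_def by (auto intro: rtrancl_into_rtrancl)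
  have outside: "wt k (ts @ [t]) x \<le> wt k ts x" if xo: "x \<notin> A \<union> B" for x
  proof -
    have na: "a \<notin> orbit p x"
    proof
      assume "a \<in> orbit p x"
      then have "orbit p a = orbit p x" by (rule orb_same[OF p])
      then show False using xo orb_self[OF p, of x] by (simp add: A_def)
    qed
    have nb: "b \<notin> orbit p x"
    proof
      assume "b \<in> orbit p x"
      then have "orbit p b = orbit p x" by (rule orb_same[OF p])
      then show False using xo orb_self[OF p, of x] by (simp add: B_def)
    qed
    have "q y = p y" if "y \<in> orbit p x" for y
    proof -
      have "p y \<in> orbit p x" using that by (rule orbit.step)
      then have "p y \<noteq> a" "p y \<noteq> b" using na nb by auto
      then show ?thesis by (simp add: q_def)
    qed
    then have Oq: "orbit q x = orbit p x" by (rule orb_agree[OF p q])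
    have keq: "orbit p x \<noteq> K x" if ne: "orbit p x \<noteq> K' x"
    proof
      assume eq: "orbit p x = K x"
      have "K' x \<subseteq> K x" unfolding K'_def
      proof (rule comp_closed)
        show "x \<in> K x" by (simp add: K_def comp_self)
        fix u v assume uv: "(u, v) \<in> edge_rel (ts @ [t])" "u \<in> K x"
        show "v \<in> K x"
        proof (cases "(u, v) \<in> edge_rel ts")
          case True then show ?thesis using Kedge uv(2) by blast
        next
          case False
          then have "{u, v} = {a, b}" using uv(1) t by (auto simp: edge_snoc)
          then have "u \<in> {a, b}" by blast
          then show ?thesis using uv(2) eq na nb by auto
        qed
      qed
      then show False using Kmono[of x] ne eq by auto
    qed
    show ?thesis using keq by (auto simp: wt_old wt_new Oq)
  qed
  have FrEq: "Fr k (perm_of ts) (perm_of (ts @ [t])) x = Fr k p q x" for x by (simp add: p_def pq)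
  have Fsum_nonneg: "0 \<le> (\<Sum>x\<in>V. Fr k p q x)" by (intro sum_nonneg Fr_nonneg)
  have main: "(\<Sum>x\<in>V. wt k (ts @ [t]) x) \<le> (\<Sum>x\<in>V. wt k ts x) + (\<Sum>x\<in>V. Fr k p q x)"
  proof (cases "b \<in> A")
    case True
    have BA: "B = A" unfolding B_def A_def using True A_def orb_same[OF p] by metis
    have inA: "wt k (ts @ [t]) x \<le> Fr k p q x" if xA: "x \<in> A" for x
    proof -
      have Opx: "orbit p x = A" unfolding A_def using xA A_def orb_same[OF p] by metis
      have sub: "orbit q x \<subseteq> A"
      proof (rule orb_closed[OF xA])
        fix y assume "y \<in> A"
        then have "p y \<in> A" unfolding A_def by (rule orbit.step)
        then show "q y \<in> A" using aA True by (auto simp: q_def Transposition.transpose_def)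
      qed
      have bo: "b \<in> orbit p a" using True by (simp add: A_def)
      obtain r where r: "r \<ge> 1" "(p ^^ r) a = b" and nh: "\<And>t. 1 \<le> t \<Longrightarrow> t < r \<Longrightarrow> (p ^^ t) a \<notin> {a, b}"
        using first_hit[of a b p] ab(2) bo by force
      have nbq: "b \<notin> orbit q a" unfolding q_def
        by (rule orb_frag(3)[OF p _ _ r nh]) (use ab in auto)
      have ne: "orbit q x \<noteq> A"
      proof
        assume eq: "orbit q x = A"
        then have "orbit q a = orbit q x" using aA orb_same[OF q] by metis
        then show False using nbq eq True by simp
      qed
      have "orbit q x \<subset> orbit p x" using sub ne Opx by auto
      then show ?thesis by (auto simp: wt_new Fr_def)
    qed
    have "wt k (ts @ [t]) x \<le> wt k ts x + Fr k p q x" for x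
    proof (cases "x \<in> A")
      case True then show ?thesis using inA wt_nonneg[of k ts x] by fastforce
    next
      case False then show ?thesis using outside[of x] BA Fr_nonneg[of k p q x] by fastforce
    qed
    then have "(\<Sum>x\<in>V. wt k (ts @ [t]) x) \<le> (\<Sum>x\<in>V. wt k ts x + Fr k p q x)" by (rule sum_mono)
    then show ?thesis by (simp add: sum.distrib)
  next
    case False
    have disj: "A \<inter> B = {}"
    proof (rule ccontr)
      assume "A \<inter> B \<noteq> {}"
      then obtain y where "y \<in> A" "y \<in> B" by blast
      then have "orbit p y = A" "orbit p y = B" unfolding A_def B_def using orb_same[OF p] by metis+
      then show False using False bB by simp
    qed
    have AV: "A \<subseteq> V" "B \<subseteq> V" unfolding A_def B_def V_def p_def using orbit_in_V[OF ts] ab by auto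
    have finA: "finite A" "finite B" unfolding A_def B_def using orb_fin[OF p] by auto
    have Oq: "orbit q x = A \<union> B" if "x \<in> A \<union> B" for x
      unfolding q_def A_def B_def by (rule orb_merge[OF p]) (use False that in \<open>auto simp: A_def B_def\<close>)
    have ABK': "A \<union> B \<subseteq> K' a" using orbit_in_comp[of "ts @ [t]" a] Oq[of a] aA
      by (simp add: pq K'_def)
    have K'eq: "K' x = K' a" if "x \<in> A \<union> B" for x
      using comp_same[of x "ts @ [t]" a] ABK' that by (auto simp: K'_def)
    have AK: "A \<subseteq> K a" "B \<subseteq> K b" using orbit_in_comp[of ts] by (auto simp: A_def B_def K_def p_def)
    have KeqA: "K x = K a" if "x \<in> A" for x using comp_same[of x ts a] AK that by (auto simp: K_def)
    have KeqB: "K x = K b" if "x \<in> B" for x using comp_same[of x ts b] AK that by (auto simp: K_def)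
    have OA: "orbit p x = A" if "x \<in> A" for x using that orb_same[OF p] unfolding A_def by metis
    have OB: "orbit p x = B" if "x \<in> B" for x using that orb_same[OF p] unfolding B_def by metis
    define cAB :: real where "cAB = (if card (A \<union> B) < k \<and> A \<union> B \<noteq> K' a then 1 else 0)"
    define cA :: real where "cA = (if card A < k \<and> A \<noteq> K a then 1 else 0)"
    define cB :: real where "cB = (if card B < k \<and> B \<noteq> K b then 1 else 0)"
    have sAB: "(\<Sum>x\<in>A \<union> B. wt k (ts @ [t]) x) = cAB"
    proof (rule sum_orbit_const)
      fix x assume x: "x \<in> A \<union> B"
      have e1: "orbit q x = A \<union> B" using Oq[OF x] .
      have e2: "K' x = K' a" using K'eq[OF x] .
      show "wt k (ts @ [t]) x = cAB / real (card (A \<union> B))"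
        unfolding wt_new e1 e2 cAB_def by simp
    qed (use finA aA in auto)
    have sA: "(\<Sum>x\<in>A. wt k ts x) = cA"
    proof (rule sum_orbit_const)
      fix x assume x: "x \<in> A"
      have e1: "orbit p x = A" using OA[OF x] .
      have e2: "K x = K a" using KeqA[OF x] .
      show "wt k ts x = cA / real (card A)"
        unfolding wt_old e1 e2 cA_def by simp
    qed (use finA aA in auto)
    have sB: "(\<Sum>x\<in>B. wt k ts x) = cB"
    proof (rule sum_orbit_const)
      fix x assume x: "x \<in> B"
      have e1: "orbit p x = B" using OB[OF x] .
      have e2: "K x = K b" using KeqB[OF x] .
      show "wt k ts x = cB / real (card B)"
        unfolding wt_old e1 e2 cB_def by simp
    qed (use finA bB in auto)
    have cineq: "cAB \<le> cA + cB"
    proof (cases "card (A \<union> B) < k \<and> A \<union> B \<noteq> K' a")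
      case True
      have cardA: "card A < k" "card B < k" using True finA card_mono[of "A \<union> B" A] card_mono[of "A \<union> B" B]
        by auto
      show ?thesis
      proof (rule ccontr)
        assume "\<not> cAB \<le> cA + cB"
        then have eqs: "A = K a" "B = K b" using cardA by (auto simp: cA_def cB_def cAB_def split: if_splits)
        have "K' a \<subseteq> K a \<union> K b" unfolding K'_def
        proof (rule comp_closed)
          show "a \<in> K a \<union> K b" by (simp add: K_def comp_self)
          fix u v assume uv: "(u, v) \<in> edge_rel (ts @ [t])" "u \<in> K a \<union> K b"
          show "v \<in> K a \<union> K b"
          proof (cases "(u, v) \<in> edge_rel ts")
            case True then show ?thesis using Kedge uv(2) by blast
          next
            case False
            then have "{u, v} = {a, b}" using uv(1) t by (auto simp: edge_snoc)
            then have "v \<in> {a, b}" by blast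
            then show ?thesis by (auto simp: K_def comp_self)
          qed
        qed
        then have "K' a = A \<union> B" using ABK' eqs by auto
        then show False using True by simp
      qed
    next
      case False then show ?thesis by (simp add: cAB_def cA_def cB_def)
    qed
    have ABV: "A \<union> B \<subseteq> V" using AV by auto
    have "(\<Sum>x\<in>V. wt k (ts @ [t]) x) = (\<Sum>x\<in>V - (A \<union> B). wt k (ts @ [t]) x) + (\<Sum>x\<in>A \<union> B. wt k (ts @ [t]) x)"
      by (rule sum.subset_diff[OF ABV finV])
    also have "\<dots> \<le> (\<Sum>x\<in>V - (A \<union> B). wt k ts x) + (cA + cB)"
      using sAB cineq by (intro add_mono sum_mono outside) auto
    also have "\<dots> = (\<Sum>x\<in>V - (A \<union> B). wt k ts x) + (\<Sum>x\<in>A \<union> B. wt k ts x)"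
      using sA sB sum.union_disjoint[OF finA disj, of "wt k ts"] by simp
    also have "\<dots> = (\<Sum>x\<in>V. wt k ts x)"
      by (rule sum.subset_diff[OF ABV finV, symmetric])
    finally show ?thesis using Fsum_nonneg by simp
  qed
  then show ?thesis by (simp add: Psi_def V_def FrEq)
qed

lemma Psi_Nil: "Psi n k [] = 0"
proof -
  have "wt k [] x = 0" for x
  proof -
    have "orbit (perm_of []) x = {x}" by (simp add: perm_of_Nil orbit_eq_singleton_iff)
    moreover have "component [] x = {x}" by (simp add: component_def edge_rel_def)
    ultimately show ?thesis by (simp add: wt_def)
  qed
  then show ?thesis by (simp add: Psi_def)
qed

lemma transps_fin: "finite (transps n)"
proof -
  have "transps n \<subseteq> {1..n} \<times> {1..n}" by (auto simp: transps_def)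
  then show ?thesis using finite_subset by blast
qed

lemma transps_card: "2 * card (transps n) = n * (n - 1)"
proof (induction n)
  case 0
  have "transps 0 = {}" by (auto simp: transps_def)
  then show ?case by simp
next
  case (Suc n)
  have eq: "transps (Suc n) = transps n \<union> (\<lambda>a. (a, Suc n)) ` {1..n}"
    by (auto simp: transps_def)
  have disj: "transps n \<inter> (\<lambda>a. (a, Suc n)) ` {1..n} = {}" by (auto simp: transps_def)
  have ci: "card ((\<lambda>a. (a, Suc n)) ` {1..n}) = n" by (subst card_image) (auto simp: inj_on_def)
  have "card (transps (Suc n)) = card (transps n) + n"
    unfolding eq by (subst card_Un_disjoint) (use transps_fin disj ci in auto)
  then show ?case using Suc.IH by (cases n) (auto simp: algebra_simps)
qed

lemma transps_ne: assumes "n \<ge> 2" shows "transps n \<noteq> {}"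
proof -
  have "(1, 2) \<in> transps n" using assms by (simp add: transps_def)
  then show ?thesis by blast
qed

lemma Fr_sum_t:
  assumes p: "permutation p"
  shows "(\<Sum>t\<in>transps n. Fr k p (transp_perm t \<circ> p) x) \<le> real k"
proof -
  let ?T = "transps n"
  let ?O = "\<lambda>t. orbit (transp_perm t \<circ> p) x"
  let ?P = "\<lambda>t j. ?O t \<subset> orbit p x \<and> card (?O t) = j"
  have qp: "permutation (transp_perm t \<circ> p)" for t unfolding transp_perm_def by (rule perm_q[OF p])
  have Fr_split: "Fr k p (transp_perm t \<circ> p) x = (\<Sum>j\<in>{1..<k}. if ?P t j then 1 / real j else 0)" for t
  proof -
    have c1: "card (?O t) \<ge> 1" by (rule orb_card_pos[OF qp])
    have "(\<Sum>j\<in>{1..<k}. if ?P t j then 1 / real j else 0)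
        = (\<Sum>j\<in>{1..<k}. if j = card (?O t) then (if ?O t \<subset> orbit p x then 1 / real j else 0) else 0)"
      by (intro sum.cong) auto
    also have "\<dots> = (if card (?O t) \<in> {1..<k} then (if ?O t \<subset> orbit p x then 1 / real (card (?O t)) else 0) else 0)"
      by (rule sum.delta) simp
    also have "\<dots> = Fr k p (transp_perm t \<circ> p) x" using c1 by (auto simp: Fr_def)
    finally show ?thesis by simp
  qed
  have "(\<Sum>t\<in>?T. Fr k p (transp_perm t \<circ> p) x) = (\<Sum>j\<in>{1..<k}. \<Sum>t\<in>?T. if ?P t j then 1 / real j else 0)"
    unfolding Fr_split by (rule sum.swap)
  also have "\<dots> = (\<Sum>j\<in>{1..<k}. real (card {t \<in> ?T. ?P t j}) * (1 / real j))"
  proof (intro sum.cong refl)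
    fix j
    have "(\<Sum>t\<in>?T. if ?P t j then 1 / real j else 0) = (\<Sum>t\<in>{t \<in> ?T. ?P t j}. 1 / real j)"
      by (rule sum.inter_filter[symmetric, OF transps_fin])
    then show "(\<Sum>t\<in>?T. if ?P t j then 1 / real j else 0) = real (card {t \<in> ?T. ?P t j}) * (1 / real j)"
      by simp
  qed
  also have "\<dots> \<le> (\<Sum>j\<in>{1..<k}. real j * (1 / real j))"
  proof (intro sum_mono mult_right_mono)
    fix j show "real (card {t \<in> ?T. ?P t j}) \<le> real j" using count_frag[OF p, of n x j] by simp
  qed simp
  also have "\<dots> = (\<Sum>j\<in>{1..<k}. 1)" by (intro sum.cong) auto
  also have "\<dots> \<le> real k" by simp
  finally show ?thesis .
qed

lemma exp_step_Psi:
  assumes n: "n \<ge> 2" and ts: "set ts \<subseteq> transps n"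
  shows "(\<Sum>t\<in>transps n. Psi n k (ts @ [t])) / card (transps n)
         \<le> Psi n k ts + real n * real k / card (transps n)"
proof -
  let ?T = "transps n"
  let ?p = "perm_of ts"
  have cT: "card ?T > 0" using transps_fin transps_ne[OF n] by (simp add: card_gt_0_iff)
  have "(\<Sum>t\<in>?T. Psi n k (ts @ [t])) \<le> (\<Sum>t\<in>?T. Psi n k ts + (\<Sum>x\<in>{1..n}. Fr k ?p (perm_of (ts @ [t])) x))"
    by (intro sum_mono step_ineq ts) auto
  also have "\<dots> = card ?T * Psi n k ts + (\<Sum>x\<in>{1..n}. \<Sum>t\<in>?T. Fr k ?p (transp_perm t \<circ> ?p) x)"
    by (simp add: sum.distrib perm_of_snoc sum.swap[of _ ?T])
  also have "\<dots> \<le> card ?T * Psi n k ts + (\<Sum>x\<in>{1..n}. real k)"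
    by (intro add_left_mono sum_mono Fr_sum_t perm_perm_of)
  also have "\<dots> = card ?T * Psi n k ts + real n * real k" by simp
  finally have "(\<Sum>t\<in>?T. Psi n k (ts @ [t])) \<le> card ?T * Psi n k ts + real n * real k" .
  then show ?thesis using cT by (simp add: field_simps)
qed

lemma Delta_le: "real (card (VG n ts k - VX n ts k)) \<le> real k * Psi n k ts"
proof -
  let ?D = "VG n ts k - VX n ts k"
  have DV: "?D \<subseteq> {1..n}" by (auto simp: VG_def)
  have finD: "finite ?D" using DV finite_subset by blast
  have one: "1 \<le> real k * wt k ts x" if x: "x \<in> ?D" for x
  proof -
    let ?O = "orbit (perm_of ts) x"
    have c1: "card ?O \<ge> 1" by (rule orb_card_pos[OF perm_perm_of])
    have ck: "card ?O < k" "card (component ts x) \<ge> k" using x by (auto simp: VG_def VX_def)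
    then have ne: "?O \<noteq> component ts x" by auto
    have w: "wt k ts x = 1 / real (card ?O)" using ck ne by (simp add: wt_def)
    have le: "real (card ?O) \<le> real k" using ck by simp
    have cpos: "real (card ?O) > 0" using c1 by simp
    have "1 \<le> real k / real (card ?O)" using le cpos by (simp add: le_divide_eq)
    then show ?thesis using w by simp
  qed
  have "real (card ?D) = (\<Sum>x\<in>?D. 1)" by simp
  also have "\<dots> \<le> (\<Sum>x\<in>?D. real k * wt k ts x)" by (intro sum_mono one)
  also have "\<dots> \<le> (\<Sum>x\<in>{1..n}. real k * wt k ts x)"
    by (intro sum_mono2 DV) (auto intro: mult_nonneg_nonneg wt_nonneg)
  also have "\<dots> = real k * Psi n k ts" by (simp add: Psi_def sum_distrib_left)
  finally show ?thesis .
qed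

theorem lemma2p2:
  fixes n k s :: nat
  assumes "n \<ge> 2"
  shows "measure_pmf.expectation (transp_seq_pmf n s)
           (\<lambda>ts. real (card (VG n ts k - VX n ts k)))
         \<le> 4 * real s * real k ^ 2 / (real n - 1)"
proof -
  let ?T = "transps n"
  let ?M = "transp_seq_pmf n s"
  have finM: "finite (set_pmf ?M)"
  proof -
    have "{xs \<in> lists ?T. length xs = s} = {xs. set xs \<subseteq> ?T \<and> length xs = s}" by auto
    then show ?thesis by (simp add: transp_seq_pmf_def set_replicate_pmf finite_lists_length_eq transps_fin transps_ne[OF assms])
  qed
  have EPsi: "measure_pmf.expectation ?M (Psi n k) \<le> s * (real n * real k / card ?T)"
    unfolding transp_seq_pmf_def
    by (rule exp_step_bound[OF transps_fin transps_ne[OF assms]]) (use Psi_Nil exp_step_Psi[OF assms] in auto)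
  have "measure_pmf.expectation ?M (\<lambda>ts. real (card (VG n ts k - VX n ts k)))
      \<le> measure_pmf.expectation ?M (\<lambda>ts. real k * Psi n k ts)"
    by (intro integral_mono integrable_measure_pmf_finite[OF finM] Delta_le)
  also have "\<dots> = real k * measure_pmf.expectation ?M (Psi n k)" by simp
  also have "\<dots> \<le> real k * (s * (real n * real k / card ?T))"
    by (intro mult_left_mono EPsi) simp
  also have "\<dots> = 2 * real s * real k ^ 2 / (real n - 1)"
  proof -
    have "2 * real (card ?T) = real n * (real n - 1)"
    proof -
      have "real (2 * card ?T) = real (n * (n - 1))" using transps_card[of n] by metis
      then show ?thesis using assms by (simp add: of_nat_diff)
    qed
    then have cT: "real (card ?T) = real n * (real n - 1) / 2" by simp
    have pos: "real n - 1 > 0" "real n > 0" using assms by auto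
    have "real k * (s * (real n * real k / (real n * (real n - 1) / 2)))
        = 2 * real s * real k ^ 2 / (real n - 1)"
      using pos by (simp add: field_simps power2_eq_square)
    then show ?thesis unfolding cT .
  qed
  also have "\<dots> \<le> 4 * real s * real k ^ 2 / (real n - 1)"
    using assms by (intro divide_right_mono) auto
  finally show ?thesis .
qed

end
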